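(* Let $X$ be a $\mathbb{Z}^n$-periodic discrete metric space with $N$ orbits and let $p\in[1,\infty]$. Then the map $A\mapsto UAU^{-1}$ is an isomorphism of Banach algebras from $\mathcal{A}_p(X)$ onto $\mathcal{A}_p(\mathbb{Z}^n,\mathbb{C}^N)$.
   Context: A discrete metric space is a countable set $X$ with a metric $\rho$ such that every ball is finite. It is $\mathbb{Z}^n$-periodic if $\mathbb{Z}^n$ acts on $X$ by $\rho$-isometries, $(\alpha,x)\mapsto\alpha\cdot x$ (with $0\cdot x=x$, $(\alpha+\beta)\cdot x=\alpha\cdot(\beta\cdot x)$), freely, with finitely many orbits; $x_1,\dots,x_N$ are fixed orbit representatives. $U:l^p(X)\to l^p(\mathbb{Z}^n,\mathbb{C}^N)$, $(Uf)(\alpha)=(f(\alpha\cdot x_1),\dots,f(\alpha\cdot x_N))$. A band operator on $l^p(X)$ is a linear operator $A$ with bounded generating function $k_A$ (i.e. $(Au)(x)=\sum_y k_A(x,y)u(y)$ for finitely supported $u$) such that $k_A(x,y)=0$ whenever $\rho(x,y)>R$ for some $R$. $\mathcal{A}_p(X)$ is the closure in $\mathcal{L}(l^p(X))$ of the band operators. A band operator on $l^p(\mathbb{Z}^n,\mathbb{C}^N)$ is an operator $\sum_{|\alpha|\le m}a_\alpha V_\alpha$ with $a_\alpha\in l^\infty(\mathbb{Z}^n,\mathbb{C}^{N\times N})$ acting by multiplication and $(V_\alpha u)(x)=u(x-\alpha)$; $\mathcal{A}_p(\mathbb{Z}^n,\mathbb{C}^N)$ is the closure of these in $\mathcal{L}(l^p(\mathbb{Z}^n,\mathbb{C}^N))$.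 *)

theory Defs
  imports "HOL-Analysis.Analysis"
begin

section \<open>l^p spaces of functions, p in [1,infinity]\<close>

definition in_lp :: "ennreal \<Rightarrow> ('a \<Rightarrow> 'b::real_normed_vector) \<Rightarrow> bool" where
  "in_lp p f \<longleftrightarrow>
     (if p = \<infinity> then bounded (range (\<lambda>x. norm (f x)))
      else (\<lambda>x. norm (f x) powr enn2real p) summable_on UNIV)"

definition lp_norm :: "ennreal \<Rightarrow> ('a \<Rightarrow> 'b::real_normed_vector) \<Rightarrow> real" where
  "lp_norm p f =
     (if p = \<infinity> then (SUP x. norm (f x))
      else (infsum (\<lambda>x. norm (f x) powr enn2real p) UNIV) powr (1 / enn2real p))"

text \<open>Bounded linear operators on l^p; sm is the complex scalar multiplication of the
  value space. Operators are total functions, only their behaviour on l^p matters.\<close>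

definition lp_op :: "ennreal \<Rightarrow> (complex \<Rightarrow> 'b \<Rightarrow> 'b) \<Rightarrow>
     (('a \<Rightarrow> 'b::real_normed_vector) \<Rightarrow> ('a \<Rightarrow> 'b)) \<Rightarrow> bool" where
  "lp_op p sm T \<longleftrightarrow>
     (\<forall>u. in_lp p u \<longrightarrow> in_lp p (T u)) \<and>
     (\<forall>u v. in_lp p u \<longrightarrow> in_lp p v \<longrightarrow> T (\<lambda>x. u x + v x) = (\<lambda>x. T u x + T v x)) \<and>
     (\<forall>c u. in_lp p u \<longrightarrow> T (\<lambda>x. sm c (u x)) = (\<lambda>x. sm c (T u x))) \<and>
     (\<exists>C. \<forall>u. in_lp p u \<longrightarrow> lp_norm p (T u) \<le> C * lp_norm p u)"

definition op_norm :: "ennreal \<Rightarrow> (('a \<Rightarrow> 'b::real_normed_vector) \<Rightarrow> ('a \<Rightarrow> 'b)) \<Rightarrow> real" where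
  "op_norm p T = Sup {lp_norm p (T u) | u. in_lp p u \<and> lp_norm p u \<le> 1}"

section \<open>Band operators and their closures\<close>

text \<open>Band operator on l^p(X): bounded generating function k with band width R,
  (A u)(x) = sum over y of k(x,y) u(y) (a finite sum since balls are finite).\<close>

definition band_op_X :: "ennreal \<Rightarrow> ('x \<Rightarrow> 'x \<Rightarrow> real) \<Rightarrow>
     (('x \<Rightarrow> complex) \<Rightarrow> ('x \<Rightarrow> complex)) \<Rightarrow> bool" where
  "band_op_X p \<rho> A \<longleftrightarrow> lp_op p (*) A \<and>
     (\<exists>k :: 'x \<Rightarrow> 'x \<Rightarrow> complex. \<exists>R M.
        (\<forall>x y. norm (k x y) \<le> M) \<and>
        (\<forall>x y. \<rho> x y > R \<longrightarrow> k x y = 0) \<and>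
        (\<forall>u. in_lp p u \<longrightarrow> A u = (\<lambda>x. \<Sum>y\<in>{y. \<rho> x y \<le> R}. k x y * u y)))"

definition Ap_X :: "ennreal \<Rightarrow> ('x \<Rightarrow> 'x \<Rightarrow> real) \<Rightarrow>
     (('x \<Rightarrow> complex) \<Rightarrow> ('x \<Rightarrow> complex)) set" where
  "Ap_X p \<rho> = {A. lp_op p (*) A \<and>
     (\<forall>\<epsilon>>0. \<exists>B. band_op_X p \<rho> B \<and> op_norm p (\<lambda>u x. A u x - B u x) < \<epsilon>)}"

text \<open>Band operator on l^p(Z^n, C^N): sum over finitely many shifts alpha of
  a_alpha V_alpha with bounded matrix-valued coefficients a_alpha.\<close>

definition band_op_Z :: "ennreal \<Rightarrow>
     ((int^'n \<Rightarrow> complex^'k) \<Rightarrow> (int^'n \<Rightarrow> complex^'k)) \<Rightarrow> bool" where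
  "band_op_Z p A \<longleftrightarrow> lp_op p (*s) A \<and>
     (\<exists>S :: (int^'n) set. \<exists>a :: int^'n \<Rightarrow> int^'n \<Rightarrow> complex^'k^'k. \<exists>M.
        finite S \<and> (\<forall>\<alpha>\<in>S. \<forall>x. norm (a \<alpha> x) \<le> M) \<and>
        (\<forall>u. in_lp p u \<longrightarrow> A u = (\<lambda>x. \<Sum>\<alpha>\<in>S. a \<alpha> x *v u (x - \<alpha>))))"

definition Ap_Z :: "ennreal \<Rightarrow>
     ((int^'n \<Rightarrow> complex^'k) \<Rightarrow> (int^'n \<Rightarrow> complex^'k)) set" where
  "Ap_Z p = {A. lp_op p (*s) A \<and>
     (\<forall>\<epsilon>>0. \<exists>B. band_op_Z p B \<and> op_norm p (\<lambda>u x. A u x - B u x) < \<epsilon>)}"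

section \<open>Periodic discrete metric spaces and the map U\<close>

definition periodic_discrete_metric_space ::
  "('x \<Rightarrow> 'x \<Rightarrow> real) \<Rightarrow> (int^'n \<Rightarrow> 'x \<Rightarrow> 'x) \<Rightarrow> ('k::finite \<Rightarrow> 'x) \<Rightarrow> bool" where
  "periodic_discrete_metric_space \<rho> act reps \<longleftrightarrow>
     countable (UNIV :: 'x set) \<and>
     (\<forall>x y. \<rho> x y = 0 \<longleftrightarrow> x = y) \<and>
     (\<forall>x y. \<rho> x y = \<rho> y x) \<and>
     (\<forall>x y z. \<rho> x z \<le> \<rho> x y + \<rho> y z) \<and>
     (\<forall>x r. finite {y. \<rho> x y \<le> r}) \<and>
     (\<forall>x. act 0 x = x) \<and>
     (\<forall>\<alpha> \<beta> x. act (\<alpha> + \<beta>) x = act \<alpha> (act \<beta> x)) \<and>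
     (\<forall>\<alpha> x y. \<rho> (act \<alpha> x) (act \<alpha> y) = \<rho> x y) \<and>
     (\<forall>\<alpha> x. act \<alpha> x = x \<longrightarrow> \<alpha> = 0) \<and>
     (\<forall>x. \<exists>\<alpha> k. x = act \<alpha> (reps k)) \<and>
     (\<forall>\<alpha> \<beta> k k'. act \<alpha> (reps k) = act \<beta> (reps k') \<longrightarrow> k = k')"

definition Umap :: "(int^'n \<Rightarrow> 'x \<Rightarrow> 'x) \<Rightarrow> ('k::finite \<Rightarrow> 'x) \<Rightarrow>
     ('x \<Rightarrow> complex) \<Rightarrow> (int^'n \<Rightarrow> complex^'k)" where
  "Umap act reps f = (\<lambda>\<alpha>. \<chi> k. f (act \<alpha> (reps k)))"

definition Uinv :: "(int^'n \<Rightarrow> 'x \<Rightarrow> 'x) \<Rightarrow> ('k::finite \<Rightarrow> 'x) \<Rightarrow>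
     (int^'n \<Rightarrow> complex^'k) \<Rightarrow> ('x \<Rightarrow> complex)" where
  "Uinv act reps v = (\<lambda>x. case (THE (\<alpha>, k). act \<alpha> (reps k) = x) of (\<alpha>, k) \<Rightarrow> v \<alpha> $ k)"

definition Uconj :: "(int^'n \<Rightarrow> 'x \<Rightarrow> 'x) \<Rightarrow> ('k::finite \<Rightarrow> 'x) \<Rightarrow>
     (('x \<Rightarrow> complex) \<Rightarrow> ('x \<Rightarrow> complex)) \<Rightarrow>
     ((int^'n \<Rightarrow> complex^'k) \<Rightarrow> (int^'n \<Rightarrow> complex^'k))" where
  "Uconj act reps A = (\<lambda>v. Umap act reps (A (Uinv act reps v)))"

end

theory Submission
  imports Defs
begin


lemma enn2real_ge1: "1 \<le> (p::ennreal) \<Longrightarrow> p \<noteq> \<infinity> \<Longrightarrow> 1 \<le> enn2real p"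
  using enn2real_mono[of 1 p] by (simp add: less_top)

lemma lp_norm_nonneg:
  assumes "in_lp p f" shows "0 \<le> lp_norm p f"
proof (cases "p = \<infinity>")
  case True
  then have b: "bounded (range (\<lambda>x. norm (f x)))" using assms by (simp add: in_lp_def)
  then have "bdd_above (range (\<lambda>x. norm (f x)))" by (rule bounded_imp_bdd_above)
  then have "norm (f undefined) \<le> (SUP x. norm (f x))" by (rule cSUP_upper[OF UNIV_I])
  then show ?thesis using True by (simp add: lp_norm_def) (meson norm_ge_zero order_trans)
next
  case False
  then show ?thesis by (simp add: lp_norm_def)
qed

lemma in_lp_zero: "in_lp p (\<lambda>x. 0)"
  by (simp add: in_lp_def)

lemma lp_norm_zero: "1 \<le> p \<Longrightarrow> lp_norm p (\<lambda>x. 0) = 0"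
  using enn2real_ge1[of p] by (simp add: lp_norm_def)

lemma lp_compare:
  fixes f :: "'a \<Rightarrow> 'b::real_normed_vector" and g :: "'a \<Rightarrow> 'c::real_normed_vector"
  assumes p: "1 \<le> p" and r: "0 \<le> r" and le: "\<And>x. norm (g x) \<le> r * norm (f x)" and f: "in_lp p f"
  shows "in_lp p g \<and> lp_norm p g \<le> r * lp_norm p f"
proof (cases "p = \<infinity>")
  case True
  then have b: "bounded (range (\<lambda>x. norm (f x)))" using f by (simp add: in_lp_def)
  then obtain B where B: "\<And>x. norm (f x) \<le> B" by (auto simp: bounded_iff)
  have "\<And>x. norm (norm (g x)) \<le> r * B"
    using le B r by (metis mult_left_mono norm_ge_zero order_trans real_norm_def abs_of_nonneg)
  then have bg: "bounded (range (\<lambda>x. norm (g x)))" by (auto simp: bounded_iff)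
  have bdd: "bdd_above (range (\<lambda>x. norm (f x)))" by (rule bounded_imp_bdd_above[OF b])
  have "(SUP x. norm (g x)) \<le> r * (SUP x. norm (f x))"
  proof (rule cSUP_least)
    fix x
    have "norm (f x) \<le> (SUP x. norm (f x))" by (rule cSUP_upper[OF UNIV_I bdd])
    then show "norm (g x) \<le> r * (SUP x. norm (f x))"
      using le[of x] r by (meson mult_left_mono order_trans)
  qed simp
  then show ?thesis using True bg by (simp add: in_lp_def lp_norm_def)
next
  case False
  define q where "q = enn2real p"
  have q: "1 \<le> q" using enn2real_ge1[OF p False] q_def by simp
  have fs: "(\<lambda>x. norm (f x) powr q) summable_on UNIV" using f False by (simp add: in_lp_def q_def)
  have pw: "norm (g x) powr q \<le> r powr q * norm (f x) powr q" for x
  proof -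
    have "norm (g x) powr q \<le> (r * norm (f x)) powr q"
      using le[of x] q by (intro powr_mono2) auto
    also have "\<dots> = r powr q * norm (f x) powr q" using r by (simp add: powr_mult)
    finally show ?thesis .
  qed
  have fs2: "(\<lambda>x. r powr q * norm (f x) powr q) summable_on UNIV"
    by (rule summable_on_cmult_right[OF fs])
  have gs: "(\<lambda>x. norm (g x) powr q) summable_on UNIV"
    by (rule summable_on_comparison_test[OF fs2]) (use pw in auto)
  have "infsum (\<lambda>x. norm (g x) powr q) UNIV \<le> infsum (\<lambda>x. r powr q * norm (f x) powr q) UNIV"
    by (rule infsum_mono[OF gs fs2]) (use pw in auto)
  also have "\<dots> = r powr q * infsum (\<lambda>x. norm (f x) powr q) UNIV"
    by (rule infsum_cmult_right) (use fs in auto)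
  finally have S: "infsum (\<lambda>x. norm (g x) powr q) UNIV \<le> r powr q * infsum (\<lambda>x. norm (f x) powr q) UNIV" .
  have nn: "0 \<le> infsum (\<lambda>x. norm (g x) powr q) UNIV" by (rule infsum_nonneg) auto
  have nn2: "0 \<le> infsum (\<lambda>x. norm (f x) powr q) UNIV" by (rule infsum_nonneg) auto
  have "infsum (\<lambda>x. norm (g x) powr q) UNIV powr (1/q) \<le> (r powr q * infsum (\<lambda>x. norm (f x) powr q) UNIV) powr (1/q)"
    using S nn q by (intro powr_mono2) auto
  also have "\<dots> = r * infsum (\<lambda>x. norm (f x) powr q) UNIV powr (1/q)"
    using r nn2 q by (simp add: powr_mult powr_powr)
  finally show ?thesis using False gs by (simp add: in_lp_def lp_norm_def q_def)
qed




lemma powr_add_le: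
  fixes a b s :: real
  assumes "0 \<le> a" "0 \<le> b" "0 < s"
  shows "(a + b) powr s \<le> 2 powr s * (a powr s + b powr s)"
proof -
  have "(a + b) powr s \<le> (2 * max a b) powr s"
    using assms by (intro powr_mono2) auto
  also have "\<dots> = 2 powr s * max a b powr s" using assms by (simp add: powr_mult)
  also have "max a b powr s \<le> a powr s + b powr s"
    by (cases "a \<le> b") (auto simp: max_def)
  then have "2 powr s * max a b powr s \<le> 2 powr s * (a powr s + b powr s)"
    by (intro mult_left_mono) auto
  finally show ?thesis .
qed

lemma lp_add:
  fixes f g :: "'a \<Rightarrow> 'b::real_normed_vector" and h :: "'a \<Rightarrow> 'c::real_normed_vector"
  assumes p: "1 \<le> p" and le: "\<And>x. norm (h x) \<le> norm (f x) + norm (g x)"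
    and f: "in_lp p f" and g: "in_lp p g"
  shows "in_lp p h \<and> lp_norm p h \<le> 4 * (lp_norm p f + lp_norm p g)"
proof (cases "p = \<infinity>")
  case True
  then obtain B where B: "\<And>x. norm (f x) \<le> B" using f by (auto simp: bounded_iff in_lp_def)
  obtain B' where B': "\<And>x. norm (g x) \<le> B'" using g True by (auto simp: bounded_iff in_lp_def)
  have "\<And>x. norm (norm (h x)) \<le> B + B'"
  proof -
    fix x show "norm (norm (h x)) \<le> B + B'" using le[of x] B[of x] B'[of x] by simp
  qed
  then have bh: "bounded (range (\<lambda>x. norm (h x)))" by (auto simp: bounded_iff)
  have bf: "bdd_above (range (\<lambda>x. norm (f x)))" using f True
    by (simp add: in_lp_def bounded_imp_bdd_above)
  have bg: "bdd_above (range (\<lambda>x. norm (g x)))" using g True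
    by (simp add: in_lp_def bounded_imp_bdd_above)
  have "(SUP x. norm (h x)) \<le> (SUP x. norm (f x)) + (SUP x. norm (g x))"
  proof (rule cSUP_least)
    fix x
    have "norm (f x) \<le> (SUP x. norm (f x))" by (rule cSUP_upper[OF UNIV_I bf])
    moreover have "norm (g x) \<le> (SUP x. norm (g x))" by (rule cSUP_upper[OF UNIV_I bg])
    ultimately show "norm (h x) \<le> (SUP x. norm (f x)) + (SUP x. norm (g x))"
      using le[of x] by linarith
  qed simp
  moreover have "0 \<le> lp_norm p f" "0 \<le> lp_norm p g" using f g by (auto intro: lp_norm_nonneg)
  ultimately show ?thesis using True bh by (simp add: in_lp_def lp_norm_def)
next
  case False
  define q where "q = enn2real p"
  have q: "1 \<le> q" using enn2real_ge1[OF p False] q_def by simp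
  have fs: "(\<lambda>x. norm (f x) powr q) summable_on UNIV" using f False by (simp add: in_lp_def q_def)
  have gs: "(\<lambda>x. norm (g x) powr q) summable_on UNIV" using g False by (simp add: in_lp_def q_def)
  have pw: "norm (h x) powr q \<le> 2 powr q * (norm (f x) powr q + norm (g x) powr q)" for x
  proof -
    have "norm (h x) powr q \<le> (norm (f x) + norm (g x)) powr q"
      using le[of x] q by (intro powr_mono2) auto
    also have "\<dots> \<le> 2 powr q * (norm (f x) powr q + norm (g x) powr q)"
      using q by (intro powr_add_le) auto
    finally show ?thesis .
  qed
  have fg: "(\<lambda>x. norm (f x) powr q + norm (g x) powr q) summable_on UNIV"
    by (rule summable_on_add[OF fs gs])
  have fs2: "(\<lambda>x. 2 powr q * (norm (f x) powr q + norm (g x) powr q)) summable_on UNIV"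
    by (rule summable_on_cmult_right[OF fg])
  have hs: "(\<lambda>x. norm (h x) powr q) summable_on UNIV"
    by (rule summable_on_comparison_test[OF fs2]) (use pw in auto)
  define Sf where "Sf = infsum (\<lambda>x. norm (f x) powr q) UNIV"
  define Sg where "Sg = infsum (\<lambda>x. norm (g x) powr q) UNIV"
  define Sh where "Sh = infsum (\<lambda>x. norm (h x) powr q) UNIV"
  have "Sh \<le> infsum (\<lambda>x. 2 powr q * (norm (f x) powr q + norm (g x) powr q)) UNIV"
    unfolding Sh_def by (rule infsum_mono[OF hs fs2]) (use pw in auto)
  also have "\<dots> = 2 powr q * (Sf + Sg)"
    unfolding Sf_def Sg_def using infsum_cmult_right[OF fg, of "2 powr q"] infsum_add[OF fs gs] by simp
  finally have S: "Sh \<le> 2 powr q * (Sf + Sg)" .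
  have nn: "0 \<le> Sh" "0 \<le> Sf" "0 \<le> Sg" unfolding Sh_def Sf_def Sg_def by (auto intro!: infsum_nonneg)
  have "Sh powr (1/q) \<le> (2 powr q * (Sf + Sg)) powr (1/q)"
    using S nn q by (intro powr_mono2) auto
  also have "\<dots> = 2 * (Sf + Sg) powr (1/q)"
    using nn q by (simp add: powr_mult powr_powr)
  also have "(Sf + Sg) powr (1/q) \<le> 2 powr (1/q) * (Sf powr (1/q) + Sg powr (1/q))"
    using nn q by (intro powr_add_le) auto
  also have "2 powr (1/q) \<le> 2"
  proof -
    have "2 powr (1/q) \<le> (2::real) powr 1" using q by (intro powr_mono) auto
    then show ?thesis by simp
  qed
  then have "2 powr (1/q) * (Sf powr (1/q) + Sg powr (1/q)) \<le> 2 * (Sf powr (1/q) + Sg powr (1/q))"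
    by (intro mult_right_mono) auto
  finally have "Sh powr (1/q) \<le> 2 * (2 * (Sf powr (1/q) + Sg powr (1/q)))" by simp
  then show ?thesis using False hs
    by (simp add: in_lp_def lp_norm_def q_def Sh_def Sf_def Sg_def)
qed




definition nice :: "ennreal \<Rightarrow> (complex \<Rightarrow> 'b \<Rightarrow> 'b) \<Rightarrow>
     (('a \<Rightarrow> 'b::real_normed_vector) \<Rightarrow> ('a \<Rightarrow> 'b)) \<Rightarrow> bool" where
  "nice p sm T \<longleftrightarrow> (\<forall>u. in_lp p u \<longrightarrow> in_lp p (T u)) \<and>
     (\<forall>c u. in_lp p u \<longrightarrow> T (\<lambda>x. sm c (u x)) = (\<lambda>x. sm c (T u x))) \<and>
     (\<exists>C. \<forall>u. in_lp p u \<longrightarrow> lp_norm p (T u) \<le> C * lp_norm p u)"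

lemma lp_op_nice: "lp_op p sm T \<Longrightarrow> nice p sm T"
  unfolding lp_op_def nice_def by blast

lemma nice_diff:
  fixes A B :: "('a \<Rightarrow> 'b::real_normed_vector) \<Rightarrow> ('a \<Rightarrow> 'b)"
  assumes p: "1 \<le> p" and sd: "\<And>c a b. sm c (a - b) = sm c a - sm c b"
    and A: "nice p sm A" and B: "nice p sm B"
  shows "nice p sm (\<lambda>u x. A u x - B u x)"
proof -
  obtain Ca where Ca: "\<And>u. in_lp p u \<Longrightarrow> lp_norm p (A u) \<le> Ca * lp_norm p u"
    using A unfolding nice_def by blast
  obtain Cb where Cb: "\<And>u. in_lp p u \<Longrightarrow> lp_norm p (B u) \<le> Cb * lp_norm p u"
    using B unfolding nice_def by blast
  have key: "in_lp p (\<lambda>x. A u x - B u x) \<and>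
      lp_norm p (\<lambda>x. A u x - B u x) \<le> 4 * (lp_norm p (A u) + lp_norm p (B u))" if u: "in_lp p u" for u :: "'a \<Rightarrow> 'b"
    by (rule lp_add[OF p]) (use A B u in \<open>auto simp: nice_def intro: norm_triangle_ineq4\<close>)
  show ?thesis
    unfolding nice_def
  proof (intro conjI allI impI exI)
    fix u :: "'a \<Rightarrow> 'b" assume u: "in_lp p u"
    show "in_lp p (\<lambda>x. A u x - B u x)" using key[OF u] by blast
  next
    fix c and u :: "'a \<Rightarrow> 'b" assume u: "in_lp p u"
    show "(\<lambda>x. A (\<lambda>x. sm c (u x)) x - B (\<lambda>x. sm c (u x)) x) = (\<lambda>x. sm c (A u x - B u x))"
      using A B u by (simp add: nice_def sd)
  next
    fix u :: "'a \<Rightarrow> 'b" assume u: "in_lp p u"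
    have n: "0 \<le> lp_norm p u" by (rule lp_norm_nonneg[OF u])
    have "Ca * lp_norm p u \<le> \<bar>Ca\<bar> * lp_norm p u" "Cb * lp_norm p u \<le> \<bar>Cb\<bar> * lp_norm p u"
      using n by (auto intro: mult_right_mono)
    then show "lp_norm p (\<lambda>x. A u x - B u x) \<le> (4 * (\<bar>Ca\<bar> + \<bar>Cb\<bar>)) * lp_norm p u"
      using key[OF u] Ca[OF u] Cb[OF u] by (simp add: algebra_simps)
  qed
qed

lemma op_norm_set_bdd:
  assumes p: "1 \<le> p" and T: "nice p sm T"
  shows "bdd_above {lp_norm p (T u) | u. in_lp p u \<and> lp_norm p u \<le> 1}"
proof -
  obtain C where C: "\<And>u. in_lp p u \<Longrightarrow> lp_norm p (T u) \<le> C * lp_norm p u"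
    using T unfolding nice_def by blast
  show ?thesis
  proof (rule bdd_aboveI)
    fix y assume "y \<in> {lp_norm p (T u) | u. in_lp p u \<and> lp_norm p u \<le> 1}"
    then obtain u where u: "in_lp p u" "lp_norm p u \<le> 1" and y: "y = lp_norm p (T u)" by blast
    have n: "0 \<le> lp_norm p u" by (rule lp_norm_nonneg[OF u(1)])
    have "C * lp_norm p u \<le> \<bar>C\<bar> * lp_norm p u" using n by (auto intro: mult_right_mono)
    also have "\<dots> \<le> \<bar>C\<bar> * 1" using u(2) by (intro mult_left_mono) auto
    finally show "y \<le> \<bar>C\<bar>" using C[OF u(1)] y by simp
  qed
qed

lemma op_norm_set_ne:
  fixes T :: "('a \<Rightarrow> 'b::real_normed_vector) \<Rightarrow> ('a \<Rightarrow> 'c::real_normed_vector)"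
  assumes p: "1 \<le> p"
  shows "{lp_norm p (T u) | u. in_lp p u \<and> lp_norm p u \<le> 1} \<noteq> {}"
proof -
  have "in_lp p (\<lambda>x::'a. 0::'b)" by (rule in_lp_zero)
  moreover have "lp_norm p (\<lambda>x::'a. 0::'b) = 0" by (rule lp_norm_zero[OF p])
  ultimately show ?thesis by fastforce
qed

lemma op_norm_le:
  assumes p: "1 \<le> p" and K: "\<And>u. in_lp p u \<Longrightarrow> lp_norm p u \<le> 1 \<Longrightarrow> lp_norm p (T u) \<le> K"
  shows "op_norm p T \<le> K"
  unfolding op_norm_def by (rule cSup_least[OF op_norm_set_ne[OF p]]) (use K in blast)

lemma op_norm_ge:
  assumes p: "1 \<le> p" and T: "nice p sm T" and u: "in_lp p u" "lp_norm p u \<le> 1"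
  shows "lp_norm p (T u) \<le> op_norm p T"
  unfolding op_norm_def by (rule cSup_upper[OF _ op_norm_set_bdd[OF p T]]) (use u in blast)

lemma op_norm_nonneg:
  assumes p: "1 \<le> p" and T: "nice p sm T"
  shows "0 \<le> op_norm p T"
proof -
  have "lp_norm p (T (\<lambda>x. 0)) \<le> op_norm p T"
    by (rule op_norm_ge[OF p T in_lp_zero]) (simp add: lp_norm_zero[OF p])
  moreover have "0 \<le> lp_norm p (T (\<lambda>x. 0))"
    using T in_lp_zero by (auto simp: nice_def intro: lp_norm_nonneg)
  ultimately show ?thesis by linarith
qed

lemma op_norm_bound:
  assumes p: "1 \<le> p" and T: "nice p sm T" and sn: "\<And>c z. norm (sm c z) = norm c * norm z"
    and u: "in_lp p u"
  shows "lp_norm p (T u) \<le> op_norm p T * lp_norm p u"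
proof -
  have step: "lp_norm p (T u) \<le> op_norm p T / t" if t: "0 < t" "t * lp_norm p u \<le> 1" for t
  proof -
    define ut where "ut = (\<lambda>x. sm (complex_of_real t) (u x))"
    have c1: "in_lp p ut \<and> lp_norm p ut \<le> t * lp_norm p u"
      by (rule lp_compare[OF p]) (use t in \<open>auto simp: ut_def sn\<close>, rule u)
    have hom: "T ut = (\<lambda>x. sm (complex_of_real t) (T u x))"
      using T u unfolding nice_def ut_def by blast
    have lpT: "in_lp p (T ut)" using T c1 unfolding nice_def by blast
    have c2: "in_lp p (T u) \<and> lp_norm p (T u) \<le> (1/t) * lp_norm p (T ut)"
      by (rule lp_compare[OF p _ _ lpT]) (use t in \<open>auto simp: hom sn\<close>)
    have "lp_norm p (T ut) \<le> op_norm p T"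
      by (rule op_norm_ge[OF p T]) (use c1 t in auto)
    then show ?thesis using c2 t by (simp add: divide_right_mono field_simps)
  qed
  have n: "0 \<le> lp_norm p u" by (rule lp_norm_nonneg[OF u])
  have o: "0 \<le> op_norm p T" by (rule op_norm_nonneg[OF p T])
  show ?thesis
  proof (cases "lp_norm p u = 0")
    case False
    then have pos: "0 < lp_norm p u" using n by simp
    have "lp_norm p (T u) \<le> op_norm p T / (1 / lp_norm p u)"
      by (rule step) (use pos in auto)
    then show ?thesis by simp
  next
    case True
    show ?thesis
    proof (rule ccontr)
      assume "\<not> ?thesis"
      then have a: "0 < lp_norm p (T u)" using True by simp
      define t where "t = (op_norm p T + 1) / lp_norm p (T u)"
      have tp: "0 < t" using a o by (simp add: t_def)
      have "lp_norm p (T u) \<le> op_norm p T / t" by (rule step) (use tp True in auto)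
      also have "\<dots> = op_norm p T * lp_norm p (T u) / (op_norm p T + 1)"
        using a o by (simp add: t_def)
      also have "\<dots> < lp_norm p (T u)"
        using a o by (simp add: field_simps)
      finally show False by simp
    qed
  qed
qed




lemma sum_le_infsum_nonneg:
  fixes f :: "'a \<Rightarrow> real"
  assumes s: "f summable_on UNIV" and n: "\<And>x. 0 \<le> f x" and F: "finite F"
  shows "sum f F \<le> infsum f UNIV"
proof -
  have "sum f F = infsum f F" using F by (rule infsum_finite[symmetric])
  also have "\<dots> \<le> infsum f UNIV"
    by (rule infsum_mono_neutral[OF summable_on_finite[OF F] s]) (simp_all add: n)
  finally show ?thesis .
qed

lemma norm_vec_le_sum: "norm (x :: 'b::real_normed_vector^'k) \<le> (\<Sum>i\<in>UNIV. norm (x $ i))"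
  unfolding norm_vec_def by (rule L2_set_le_sum) simp

lemma norm_vec_le_max:
  fixes x :: "'b::real_normed_vector^'k"
  shows "\<exists>i0. norm x \<le> real CARD('k) * norm (x $ i0) \<and> (\<forall>i. norm (x $ i) \<le> norm (x $ i0))"
proof -
  define m where "m = Max (range (\<lambda>i. norm (x $ i)))"
  have "m \<in> range (\<lambda>i. norm (x $ i))" unfolding m_def by (rule Max_in) simp_all
  then obtain i0 where i0: "m = norm (x $ i0)" by blast
  have ge: "norm (x $ i) \<le> norm (x $ i0)" for i
  proof -
    have "norm (x $ i) \<le> m" unfolding m_def by (rule Max_ge) simp_all
    then show ?thesis using i0 by simp
  qed
  have "norm x \<le> (\<Sum>i\<in>UNIV. norm (x $ i))" by (rule norm_vec_le_sum)
  also have "\<dots> \<le> of_nat (card (UNIV::'k set)) * norm (x $ i0)" by (rule sum_bounded_above) (rule ge)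
  finally show ?thesis using ge by blast
qed

locale pds =
  fixes \<rho> :: "'x \<Rightarrow> 'x \<Rightarrow> real" and act :: "int^'n \<Rightarrow> 'x \<Rightarrow> 'x" and reps :: "'k::finite \<Rightarrow> 'x"
  assumes X: "periodic_discrete_metric_space \<rho> act reps"
begin

lemma Xc: "(\<forall>x. act 0 x = x) \<and> (\<forall>\<alpha> \<beta> x. act (\<alpha> + \<beta>) x = act \<alpha> (act \<beta> x)) \<and>
  (\<forall>\<alpha> x y. \<rho> (act \<alpha> x) (act \<alpha> y) = \<rho> x y) \<and> (\<forall>\<alpha> x. act \<alpha> x = x \<longrightarrow> \<alpha> = 0) \<and>
  (\<forall>x. \<exists>\<alpha> k. x = act \<alpha> (reps k)) \<and>
  (\<forall>\<alpha> \<beta> k k'. act \<alpha> (reps k) = act \<beta> (reps k') \<longrightarrow> k = k') \<and> (\<forall>x r. finite {y. \<rho> x y \<le> r})"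
  using X unfolding periodic_discrete_metric_space_def by (elim conjE) (intro conjI; assumption)

lemma act0: "act 0 x = x" using Xc[THEN conjunct1] by blast
lemma act_add: "act (\<alpha> + \<beta>) x = act \<alpha> (act \<beta> x)" using Xc[THEN conjunct2, THEN conjunct1] by blast
lemma rho_act: "\<rho> (act \<alpha> x) (act \<alpha> y) = \<rho> x y" using Xc[THEN conjunct2, THEN conjunct2, THEN conjunct1] by blast
lemma free: "act \<alpha> x = x \<Longrightarrow> \<alpha> = 0" using Xc[THEN conjunct2, THEN conjunct2, THEN conjunct2, THEN conjunct1] by blast
lemma surj_act: "\<exists>\<alpha> k. x = act \<alpha> (reps k)" using Xc[THEN conjunct2, THEN conjunct2, THEN conjunct2, THEN conjunct2, THEN conjunct1] by blast
lemma orb: "act \<alpha> (reps k) = act \<beta> (reps k') \<Longrightarrow> k = k'" using Xc[THEN conjunct2, THEN conjunct2, THEN conjunct2, THEN conjunct2, THEN conjunct2, THEN conjunct1] by blast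
lemma balls: "finite {y. \<rho> x y \<le> r}" using Xc[THEN conjunct2, THEN conjunct2, THEN conjunct2, THEN conjunct2, THEN conjunct2, THEN conjunct2] by blast

lemma act_inj_iff: "act \<alpha> (reps i) = act \<beta> (reps j) \<longleftrightarrow> \<alpha> = \<beta> \<and> i = j"
proof
  assume h: "act \<alpha> (reps i) = act \<beta> (reps j)"
  then have ij: "i = j" by (rule orb)
  have "act (\<alpha> - \<beta>) (act \<beta> (reps j)) = act \<alpha> (reps j)" by (simp flip: act_add)
  then have "act (\<alpha> - \<beta>) (act \<beta> (reps j)) = act \<beta> (reps j)" using h ij by simp
  then have "\<alpha> - \<beta> = 0" by (rule free)
  then show "\<alpha> = \<beta> \<and> i = j" using ij by simp
qed auto

lemma act_inj: "inj (\<lambda>\<alpha>. act \<alpha> (reps i))"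
  by (auto intro: injI simp: act_inj_iff)

lemma bij_phi: "bij_betw (\<lambda>(\<alpha>, i). act \<alpha> (reps i)) UNIV UNIV"
  unfolding bij_betw_def
proof
  show "inj_on (\<lambda>(\<alpha>, i). act \<alpha> (reps i)) UNIV" by (auto intro!: inj_onI simp: act_inj_iff)
  show "range (\<lambda>(\<alpha>, i). act \<alpha> (reps i)) = UNIV"
  proof -
    have "x \<in> range (\<lambda>(\<alpha>, i). act \<alpha> (reps i))" for x
    proof -
      obtain \<alpha> k where "x = act \<alpha> (reps k)" using surj_act by blast
      then have "x = (\<lambda>(\<alpha>, i). act \<alpha> (reps i)) (\<alpha>, k)" by simp
      then show ?thesis by (rule image_eqI) simp
    qed
    then show ?thesis by blast
  qed
qed

lemma rho_shift: "\<rho> (act \<alpha> x) (act \<beta> y) = \<rho> x (act (\<beta> - \<alpha>) y)"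
proof -
  have "act \<beta> y = act \<alpha> (act (\<beta> - \<alpha>) y)" by (simp flip: act_add)
  then show ?thesis by (simp add: rho_act)
qed

lemma Uinv_act [simp]: "Uinv act reps v (act \<alpha> (reps i)) = v \<alpha> $ i"
proof -
  have "(THE (\<beta>, k). act \<beta> (reps k) = act \<alpha> (reps i)) = (\<alpha>, i)"
    by (rule the_equality) (auto simp: act_inj_iff)
  then show ?thesis by (simp add: Uinv_def)
qed

lemma Umap_nth [simp]: "Umap act reps f \<alpha> $ i = f (act \<alpha> (reps i))"
  by (simp add: Umap_def)

lemma Umap_Uinv [simp]: "Umap act reps (Uinv act reps v) = v"
  by (auto simp: vec_eq_iff)

lemma Uinv_Umap [simp]: "Uinv act reps (Umap act reps f) = f"
proof
  fix x
  obtain \<alpha> i where "x = act \<alpha> (reps i)" using surj_act by blast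
  then show "Uinv act reps (Umap act reps f) x = f x" by simp
qed

lemma Umap_inj: "Umap act reps f = Umap act reps g \<Longrightarrow> f = g"
  by (metis Uinv_Umap)

lemma lp_Umap:
  fixes f :: "'x \<Rightarrow> complex"
  assumes p: "1 \<le> p"
  shows "(in_lp p f \<longleftrightarrow> in_lp p (Umap act reps f)) \<and>
    (in_lp p f \<longrightarrow> lp_norm p f \<le> real CARD('k) * lp_norm p (Umap act reps f) \<and>
        lp_norm p (Umap act reps f) \<le> real CARD('k) * lp_norm p f)"
proof -
  define N where "N = real CARD('k)"
  have N1: "1 \<le> N" unfolding N_def by (simp add: Suc_leI)
  define v where "v = Umap act reps f"
  have cf: "norm (f (act \<alpha> (reps i))) \<le> norm (v \<alpha>)" for \<alpha> i
    using Finite_Cartesian_Product.norm_nth_le[of "v \<alpha>" i] by (simp add: v_def)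
  have cg: "\<exists>i0. norm (v \<alpha>) \<le> N * norm (f (act \<alpha> (reps i0)))" for \<alpha>
    using norm_vec_le_max[of "v \<alpha>"] unfolding N_def v_def by auto
  show ?thesis
  proof (cases "p = \<infinity>")
    case True
    have i1: "in_lp p v" if lf0: "in_lp p f"
    proof -
      obtain B where B: "\<And>x. norm (f x) \<le> B" using lf0 True by (auto simp: bounded_iff in_lp_def)
      have "norm (norm (v \<alpha>)) \<le> N * B" for \<alpha>
        using cg[of \<alpha>] B N1 by (smt (verit, best) mult_left_mono norm_ge_zero real_norm_def)
      then show ?thesis using True by (auto simp: bounded_iff in_lp_def)
    qed
    have i2: "in_lp p f" if lv0: "in_lp p v"
    proof -
      obtain B where B: "\<And>\<alpha>. norm (v \<alpha>) \<le> B" using lv0 True by (auto simp: bounded_iff in_lp_def)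
      have "norm (norm (f x)) \<le> B" for x
      proof -
        obtain \<alpha> i where x: "x = act \<alpha> (reps i)" using surj_act by blast
        show ?thesis using cf[of \<alpha> i] B[of \<alpha>] x by simp
      qed
      then show ?thesis using True by (auto simp: bounded_iff in_lp_def)
    qed
    have norms: "lp_norm p f \<le> N * lp_norm p v \<and> lp_norm p v \<le> N * lp_norm p f" if lf: "in_lp p f"
    proof -
      have bf: "bdd_above (range (\<lambda>x. norm (f x)))" using lf True
        by (simp add: in_lp_def bounded_imp_bdd_above)
      have bv: "bdd_above (range (\<lambda>x. norm (v x)))" using i1[OF lf] True
        by (simp add: in_lp_def bounded_imp_bdd_above)
      have s1: "(SUP x. norm (f x)) \<le> (SUP x. norm (v x))"
      proof (rule cSUP_least)
        fix x
        obtain \<alpha> i where x: "x = act \<alpha> (reps i)" using surj_act by blast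
        show "norm (f x) \<le> (SUP x. norm (v x))"
          using cf[of \<alpha> i] cSUP_upper[OF UNIV_I bv, of \<alpha>] x by simp
      qed simp
      have s2: "(SUP x. norm (v x)) \<le> N * (SUP x. norm (f x))"
      proof (rule cSUP_least)
        fix \<alpha>
        obtain i0 where "norm (v \<alpha>) \<le> N * norm (f (act \<alpha> (reps i0)))" using cg by blast
        moreover have "norm (f (act \<alpha> (reps i0))) \<le> (SUP x. norm (f x))"
          by (rule cSUP_upper[OF UNIV_I bf])
        ultimately show "norm (v \<alpha>) \<le> N * (SUP x. norm (f x))"
          using N1 by (smt (verit) mult_left_mono)
      qed simp
      have "0 \<le> (SUP x. norm (v x))" using s1 lp_norm_nonneg[OF lf] True by (simp add: lp_norm_def)
      then have "(SUP x. norm (v x)) \<le> N * (SUP x. norm (v x))" using N1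
        by (simp add: mult_le_cancel_right1)
      then show ?thesis using s1 s2 True by (simp add: lp_norm_def)
    qed
    show ?thesis using i1 i2 norms unfolding N_def v_def by blast
  next
    case False
    define q where "q = enn2real p"
    have q: "1 \<le> q" using enn2real_ge1[OF p False] q_def by simp
    define a where "a = (\<lambda>(\<alpha>, i). norm (f (act \<alpha> (reps i))) powr q)"
    define g where "g = (\<lambda>\<alpha>. norm (v \<alpha>) powr q)"
    have ann: "0 \<le> a z" for z by (simp add: a_def split: prod.splits)
    have gnn: "0 \<le> g \<alpha>" for \<alpha> by (simp add: g_def)
    have reX: "(\<lambda>x. norm (f x) powr q) summable_on UNIV \<longleftrightarrow> a summable_on UNIV"
      using summable_on_reindex_bij_betw[OF bij_phi, of "\<lambda>x. norm (f x) powr q"]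
      by (simp add: a_def case_prod_beta')
    have reXs: "infsum (\<lambda>x. norm (f x) powr q) UNIV = infsum a UNIV"
      using infsum_reindex_bij_betw[OF bij_phi, of "\<lambda>x. norm (f x) powr q"]
      by (simp add: a_def case_prod_beta')
    have ag: "a (\<alpha>, i) \<le> g \<alpha>" for \<alpha> i
      unfolding a_def g_def using cf[of \<alpha> i] q by (auto intro: powr_mono2)
    have ga: "g \<alpha> \<le> N powr q * (\<Sum>i\<in>UNIV. a (\<alpha>, i))" for \<alpha>
    proof -
      obtain i0 where i0: "norm (v \<alpha>) \<le> N * norm (f (act \<alpha> (reps i0)))" using cg by blast
      have "g \<alpha> \<le> (N * norm (f (act \<alpha> (reps i0)))) powr q"
        unfolding g_def using i0 q by (intro powr_mono2) auto
      also have "\<dots> = N powr q * a (\<alpha>, i0)" using N1 by (simp add: a_def powr_mult)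
      also have "a (\<alpha>, i0) \<le> (\<Sum>i\<in>UNIV. a (\<alpha>, i))"
        by (rule member_le_sum) (auto simp: ann)
      then have "N powr q * a (\<alpha>, i0) \<le> N powr q * (\<Sum>i\<in>UNIV. a (\<alpha>, i))"
        by (intro mult_left_mono) auto
      finally show ?thesis .
    qed
    have L1: "g summable_on UNIV \<and> infsum g UNIV \<le> N powr q * infsum a UNIV" if as: "a summable_on UNIV"
    proof -
      have fin: "sum g F \<le> N powr q * infsum a UNIV" if F: "finite F" for F
      proof -
        have "sum g F \<le> (\<Sum>\<alpha>\<in>F. N powr q * (\<Sum>i\<in>UNIV. a (\<alpha>, i)))" by (rule sum_mono) (rule ga)
        also have "\<dots> = N powr q * (\<Sum>z\<in>F \<times> UNIV. a z)"
          by (simp add: sum_distrib_left sum.cartesian_product)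
        also have "(\<Sum>z\<in>F \<times> UNIV. a z) \<le> infsum a UNIV"
          by (rule sum_le_infsum_nonneg[OF as ann]) (use F in simp)
        then have "N powr q * (\<Sum>z\<in>F \<times> UNIV. a z) \<le> N powr q * infsum a UNIV"
          by (intro mult_left_mono) auto
        finally show ?thesis .
      qed
      have gs: "g summable_on UNIV"
        by (rule nonneg_bdd_above_summable_on) (use gnn fin in \<open>auto intro!: bdd_aboveI\<close>)
      have "infsum g UNIV \<le> N powr q * infsum a UNIV"
        by (rule infsum_le_finite_sums[OF gs]) (use fin in auto)
      then show ?thesis using gs by blast
    qed
    have L2: "a summable_on UNIV \<and> infsum a UNIV \<le> N * infsum g UNIV" if gs: "g summable_on UNIV"
    proof -
      have fin: "sum a F \<le> N * infsum g UNIV" if F: "finite F" for F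
      proof -
        have "sum a F \<le> sum a (fst ` F \<times> UNIV)"
          by (rule sum_mono2) (use F ann in \<open>auto simp: image_iff\<close>, force)
        also have "\<dots> = (\<Sum>\<alpha>\<in>fst ` F. \<Sum>i\<in>UNIV. a (\<alpha>, i))"
          by (simp add: sum.cartesian_product)
        also have "\<dots> \<le> (\<Sum>\<alpha>\<in>fst ` F. N * g \<alpha>)"
        proof (rule sum_mono)
          fix \<alpha>
          have "(\<Sum>i\<in>UNIV. a (\<alpha>, i)) \<le> of_nat (card (UNIV::'k set)) * g \<alpha>"
            by (rule sum_bounded_above) (rule ag)
          then show "(\<Sum>i\<in>UNIV. a (\<alpha>, i)) \<le> N * g \<alpha>" by (simp add: N_def)
        qed
        also have "\<dots> = N * sum g (fst ` F)" by (simp add: sum_distrib_left)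
        also have "sum g (fst ` F) \<le> infsum g UNIV"
          by (rule sum_le_infsum_nonneg[OF gs gnn]) (use F in simp)
        then have "N * sum g (fst ` F) \<le> N * infsum g UNIV" using N1 by (intro mult_left_mono) auto
        finally show ?thesis .
      qed
      have as: "a summable_on UNIV"
        by (rule nonneg_bdd_above_summable_on) (use ann fin in \<open>auto intro!: bdd_aboveI\<close>)
      have "infsum a UNIV \<le> N * infsum g UNIV"
        by (rule infsum_le_finite_sums[OF as]) (use fin in auto)
      then show ?thesis using as by blast
    qed
    have eqv: "in_lp p f \<longleftrightarrow> in_lp p v"
      using L1 L2 reX False by (auto simp: in_lp_def q_def g_def)
    have norms: "lp_norm p f \<le> N * lp_norm p v \<and> lp_norm p v \<le> N * lp_norm p f" if lf: "in_lp p f"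
    proof -
      have as: "a summable_on UNIV" using lf reX False by (simp add: in_lp_def q_def)
      define A where "A = infsum a UNIV"
      define G where "G = infsum g UNIV"
      have A0: "0 \<le> A" unfolding A_def by (rule infsum_nonneg) (rule ann)
      have G0: "0 \<le> G" unfolding G_def by (rule infsum_nonneg) (rule gnn)
      have GA: "G \<le> N powr q * A" using L1[OF as] by (simp add: G_def A_def)
      have AG: "A \<le> N * G" using L1[OF as] L2 by (simp add: G_def A_def)
      have lf_eq: "lp_norm p f = A powr (1/q)" using False reXs by (simp add: lp_norm_def q_def A_def)
      have lv_eq: "lp_norm p v = G powr (1/q)" using False by (simp add: lp_norm_def q_def G_def g_def)
      have "A powr (1/q) \<le> (N * G) powr (1/q)" using AG A0 q by (intro powr_mono2) auto
      also have "\<dots> = N powr (1/q) * G powr (1/q)" using N1 G0 by (simp add: powr_mult)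
      also have "N powr (1/q) \<le> N powr 1" using N1 q by (intro powr_mono) auto
      then have "N powr (1/q) * G powr (1/q) \<le> N * G powr (1/q)" using N1 by (intro mult_right_mono) auto
      finally have 1: "A powr (1/q) \<le> N * G powr (1/q)" .
      have "G powr (1/q) \<le> (N powr q * A) powr (1/q)" using GA G0 q by (intro powr_mono2) auto
      also have "\<dots> = N * A powr (1/q)" using N1 A0 q by (simp add: powr_mult powr_powr)
      finally have 2: "G powr (1/q) \<le> N * A powr (1/q)" .
      show ?thesis using 1 2 lf_eq lv_eq by simp
    qed
    show ?thesis using eqv norms unfolding N_def v_def by blast
  qed
qed

end



lemma norm_smult_vec: "norm (c *s (x :: complex^'k)) = norm c * norm x"
proof -
  have "norm (c *s x) = L2_set (\<lambda>i. norm c * norm (x $ i)) UNIV"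
    unfolding norm_vec_def by (simp add: norm_mult)
  also have "\<dots> = norm c * norm x"
    unfolding norm_vec_def by (rule L2_set_right_distrib[symmetric]) simp
  finally show ?thesis .
qed

lemma smult_vec_diff: "c *s ((a::complex^'k) - b) = c *s a - c *s b"
  by (simp add: vec_eq_iff algebra_simps)

context pds
begin


definition Ub :: "((int^'n \<Rightarrow> complex^'k) \<Rightarrow> (int^'n \<Rightarrow> complex^'k)) \<Rightarrow> ('x \<Rightarrow> complex) \<Rightarrow> ('x \<Rightarrow> complex)"
  where "Ub T = (\<lambda>u. Uinv act reps (T (Umap act reps u)))"

lemma N1: "1 \<le> real CARD('k)" by (simp add: Suc_leI)

lemma Umap_add: "Umap act reps (\<lambda>x. f x + g x) = (\<lambda>\<alpha>. Umap act reps f \<alpha> + Umap act reps g \<alpha>)"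
  by (auto simp: vec_eq_iff)
lemma Umap_diff: "Umap act reps (\<lambda>x. f x - g x) = (\<lambda>\<alpha>. Umap act reps f \<alpha> - Umap act reps g \<alpha>)"
  by (auto simp: vec_eq_iff)
lemma Umap_cmult: "Umap act reps (\<lambda>x. c * f x) = (\<lambda>\<alpha>. c *s Umap act reps f \<alpha>)"
  by (auto simp: vec_eq_iff)

lemma Uinv_ext: "(\<And>\<alpha> i. F (act \<alpha> (reps i)) = G (act \<alpha> (reps i))) \<Longrightarrow> F = G"
proof
  fix x assume h: "\<And>\<alpha> i. F (act \<alpha> (reps i)) = G (act \<alpha> (reps i))"
  obtain \<alpha> i where "x = act \<alpha> (reps i)" using surj_act by blast
  then show "F x = G x" using h by simp
qed

lemma Uinv_add: "Uinv act reps (\<lambda>\<alpha>. v \<alpha> + w \<alpha>) = (\<lambda>x. Uinv act reps v x + Uinv act reps w x)"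
  by (rule Uinv_ext) simp
lemma Uinv_diff: "Uinv act reps (\<lambda>\<alpha>. v \<alpha> - w \<alpha>) = (\<lambda>x. Uinv act reps v x - Uinv act reps w x)"
  by (rule Uinv_ext) simp
lemma Uinv_cmult: "Uinv act reps (\<lambda>\<alpha>. c *s v \<alpha>) = (\<lambda>x. c * Uinv act reps v x)"
  by (rule Uinv_ext) simp

lemma lp_Uinv:
  assumes p: "1 \<le> p"
  shows "(in_lp p v \<longleftrightarrow> in_lp p (Uinv act reps v)) \<and>
    (in_lp p v \<longrightarrow> lp_norm p (Uinv act reps v) \<le> real CARD('k) * lp_norm p v \<and>
        lp_norm p v \<le> real CARD('k) * lp_norm p (Uinv act reps v))"
  using lp_Umap[OF p, of "Uinv act reps v"] by simp

lemma nice_Uconj: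
  assumes p: "1 \<le> p" and A: "nice p (*) A"
  shows "nice p (*s) (Uconj act reps A)"
  unfolding nice_def
proof (intro conjI allI impI)
  fix v :: "int^'n \<Rightarrow> complex^'k" assume v: "in_lp p v"
  have w: "in_lp p (Uinv act reps v)" using lp_Uinv[OF p] v by blast
  then have "in_lp p (A (Uinv act reps v))" using A by (simp add: nice_def)
  then show "in_lp p (Uconj act reps A v)" using lp_Umap[OF p] by (simp add: Uconj_def)
next
  fix c and v :: "int^'n \<Rightarrow> complex^'k" assume v: "in_lp p v"
  have w: "in_lp p (Uinv act reps v)" using lp_Uinv[OF p] v by blast
  show "Uconj act reps A (\<lambda>x. c *s v x) = (\<lambda>x. c *s Uconj act reps A v x)"
    using A w by (simp add: Uconj_def Uinv_cmult nice_def Umap_cmult)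
next
  obtain C where C: "\<And>u. in_lp p u \<Longrightarrow> lp_norm p (A u) \<le> C * lp_norm p u"
    using A unfolding nice_def by blast
  show "\<exists>C. \<forall>v. in_lp p v \<longrightarrow> lp_norm p (Uconj act reps A v) \<le> C * lp_norm p v"
  proof (intro exI allI impI)
    fix v :: "int^'n \<Rightarrow> complex^'k" assume v: "in_lp p v"
    define w where "w = Uinv act reps v"
    have w: "in_lp p w" "lp_norm p w \<le> real CARD('k) * lp_norm p v" using lp_Uinv[OF p] v unfolding w_def by blast+
    have Aw: "in_lp p (A w)" using A w by (simp add: nice_def)
    have n: "0 \<le> lp_norm p w" "0 \<le> lp_norm p v" using w v by (auto intro: lp_norm_nonneg)
    have "lp_norm p (Uconj act reps A v) \<le> real CARD('k) * lp_norm p (A w)"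
      using lp_Umap[OF p] Aw unfolding Uconj_def w_def by blast
    also have "lp_norm p (A w) \<le> \<bar>C\<bar> * lp_norm p w"
      using C[OF w(1)] n by (smt (verit) mult_right_mono abs_ge_self)
    also have "\<dots> \<le> \<bar>C\<bar> * (real CARD('k) * lp_norm p v)" using w(2) by (intro mult_left_mono) auto
    finally show "lp_norm p (Uconj act reps A v) \<le> (real CARD('k) * (\<bar>C\<bar> * real CARD('k))) * lp_norm p v"
      using N1 by (simp add: mult_left_mono algebra_simps)
  qed
qed

lemma nice_Ub:
  assumes p: "1 \<le> p" and T: "nice p (*s) T"
  shows "nice p (*) (Ub T)"
  unfolding nice_def
proof (intro conjI allI impI)
  fix u :: "'x \<Rightarrow> complex" assume u: "in_lp p u"
  have w: "in_lp p (Umap act reps u)" using lp_Umap[OF p] u by blast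
  then have "in_lp p (T (Umap act reps u))" using T by (simp add: nice_def)
  then show "in_lp p (Ub T u)" using lp_Uinv[OF p] by (simp add: Ub_def)
next
  fix c and u :: "'x \<Rightarrow> complex" assume u: "in_lp p u"
  have w: "in_lp p (Umap act reps u)" using lp_Umap[OF p] u by blast
  show "Ub T (\<lambda>x. c * u x) = (\<lambda>x. c * Ub T u x)"
    using T w by (simp add: Ub_def Uinv_cmult nice_def Umap_cmult)
next
  obtain C where C: "\<And>u. in_lp p u \<Longrightarrow> lp_norm p (T u) \<le> C * lp_norm p u"
    using T unfolding nice_def by blast
  show "\<exists>C. \<forall>u. in_lp p u \<longrightarrow> lp_norm p (Ub T u) \<le> C * lp_norm p u"
  proof (intro exI allI impI)
    fix u :: "'x \<Rightarrow> complex" assume u: "in_lp p u"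
    define w where "w = Umap act reps u"
    have w: "in_lp p w" "lp_norm p w \<le> real CARD('k) * lp_norm p u" using lp_Umap[OF p] u unfolding w_def by blast+
    have Tw: "in_lp p (T w)" using T w by (simp add: nice_def)
    have n: "0 \<le> lp_norm p w" "0 \<le> lp_norm p u" using w u by (auto intro: lp_norm_nonneg)
    have "lp_norm p (Ub T u) \<le> real CARD('k) * lp_norm p (T w)"
      using lp_Uinv[OF p] Tw unfolding Ub_def w_def by blast
    also have "lp_norm p (T w) \<le> \<bar>C\<bar> * lp_norm p w"
      using C[OF w(1)] n by (smt (verit) mult_right_mono abs_ge_self)
    also have "\<dots> \<le> \<bar>C\<bar> * (real CARD('k) * lp_norm p u)" using w(2) by (intro mult_left_mono) auto
    finally show "lp_norm p (Ub T u) \<le> (real CARD('k) * (\<bar>C\<bar> * real CARD('k))) * lp_norm p u"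
      using N1 by (simp add: mult_left_mono algebra_simps)
  qed
qed

lemma lp_op_Uconj:
  assumes p: "1 \<le> p" and A: "lp_op p (*) A"
  shows "lp_op p (*s) (Uconj act reps A)"
proof -
  have n: "nice p (*s) (Uconj act reps A)" by (rule nice_Uconj[OF p lp_op_nice[OF A]])
  have add: "Uconj act reps A (\<lambda>x. u x + v x) = (\<lambda>x. Uconj act reps A u x + Uconj act reps A v x)"
    if "in_lp p u" "in_lp p v" for u v :: "int^'n \<Rightarrow> complex^'k"
  proof -
    have "in_lp p (Uinv act reps u)" "in_lp p (Uinv act reps v)" using lp_Uinv[OF p] that by blast+
    then show ?thesis using A by (simp add: Uconj_def Uinv_add lp_op_def Umap_add)
  qed
  show ?thesis using n add unfolding lp_op_def nice_def by blast
qed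

lemma lp_op_Ub:
  assumes p: "1 \<le> p" and T: "lp_op p (*s) T"
  shows "lp_op p (*) (Ub T)"
proof -
  have n: "nice p (*) (Ub T)" by (rule nice_Ub[OF p lp_op_nice[OF T]])
  have add: "Ub T (\<lambda>x. u x + v x) = (\<lambda>x. Ub T u x + Ub T v x)"
    if "in_lp p u" "in_lp p v" for u v :: "'x \<Rightarrow> complex"
  proof -
    have "in_lp p (Umap act reps u)" "in_lp p (Umap act reps v)" using lp_Umap[OF p] that by blast+
    then show ?thesis using T by (simp add: Ub_def Uinv_add lp_op_def Umap_add)
  qed
  show ?thesis using n add unfolding lp_op_def nice_def by blast
qed

lemma op_Uconj:
  assumes p: "1 \<le> p" and A: "nice p (*) A"
  shows "op_norm p (Uconj act reps A) \<le> real CARD('k)^2 * op_norm p A"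
proof (rule op_norm_le[OF p])
  fix v :: "int^'n \<Rightarrow> complex^'k" assume v: "in_lp p v" "lp_norm p v \<le> 1"
  define w where "w = Uinv act reps v"
  have w: "in_lp p w" "lp_norm p w \<le> real CARD('k) * lp_norm p v" using lp_Uinv[OF p] v unfolding w_def by blast+
  have Aw: "in_lp p (A w)" using A w by (simp add: nice_def)
  have o: "0 \<le> op_norm p A" by (rule op_norm_nonneg[OF p A])
  have n: "0 \<le> lp_norm p w" "0 \<le> lp_norm p v" using w v by (auto intro: lp_norm_nonneg)
  have "lp_norm p (Uconj act reps A v) \<le> real CARD('k) * lp_norm p (A w)"
    using lp_Umap[OF p] Aw unfolding Uconj_def w_def by blast
  also have "lp_norm p (A w) \<le> op_norm p A * lp_norm p w"
    by (rule op_norm_bound[OF p A _ w(1)]) (simp add: norm_mult)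
  also have "\<dots> \<le> op_norm p A * (real CARD('k) * 1)"
    using w(2) v(2) o N1 by (intro mult_left_mono) (auto intro: order_trans mult_left_mono)
  finally show "lp_norm p (Uconj act reps A v) \<le> real CARD('k)^2 * op_norm p A"
    using N1 by (simp add: mult_left_mono power2_eq_square algebra_simps)
qed

lemma op_Ub:
  assumes p: "1 \<le> p" and T: "nice p (*s) T"
  shows "op_norm p (Ub T) \<le> real CARD('k)^2 * op_norm p T"
proof (rule op_norm_le[OF p])
  fix u :: "'x \<Rightarrow> complex" assume u: "in_lp p u" "lp_norm p u \<le> 1"
  define w where "w = Umap act reps u"
  have w: "in_lp p w" "lp_norm p w \<le> real CARD('k) * lp_norm p u" using lp_Umap[OF p] u unfolding w_def by blast+
  have Tw: "in_lp p (T w)" using T w by (simp add: nice_def)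
  have o: "0 \<le> op_norm p T" by (rule op_norm_nonneg[OF p T])
  have "lp_norm p (Ub T u) \<le> real CARD('k) * lp_norm p (T w)"
    using lp_Uinv[OF p] Tw unfolding Ub_def w_def by blast
  also have "lp_norm p (T w) \<le> op_norm p T * lp_norm p w"
    by (rule op_norm_bound[OF p T _ w(1)]) (simp add: norm_smult_vec)
  also have "\<dots> \<le> op_norm p T * (real CARD('k) * 1)"
    using w(2) u(2) o N1 by (intro mult_left_mono) (auto intro: order_trans mult_left_mono)
  finally show "lp_norm p (Ub T u) \<le> real CARD('k)^2 * op_norm p T"
    using N1 by (simp add: mult_left_mono power2_eq_square algebra_simps)
qed

end



context pds
begin

lemma sum_reindex_ball:
  fixes F :: "'x \<Rightarrow> complex"
  assumes S: "finite S" and T: "finite T"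
    and nz: "\<And>y. F y \<noteq> 0 \<Longrightarrow> y \<in> T \<and> (\<exists>\<gamma>\<in>S. \<exists>j. y = act (\<alpha> - \<gamma>) (reps j))"
  shows "sum F T = (\<Sum>\<gamma>\<in>S. \<Sum>j\<in>UNIV. F (act (\<alpha> - \<gamma>) (reps j)))"
proof -
  define \<psi> where "\<psi> = (\<lambda>(\<gamma>, j). act (\<alpha> - \<gamma>) (reps j))"
  define I where "I = \<psi> ` (S \<times> UNIV)"
  have inj: "inj_on \<psi> (S \<times> UNIV)" unfolding \<psi>_def by (auto intro!: inj_onI simp: act_inj_iff)
  have fI: "finite I" unfolding I_def using S by simp
  have "sum F T = sum F (T \<union> I)"
  proof (rule sum.mono_neutral_left)
    show "\<forall>i\<in>T \<union> I - T. F i = 0" using nz by blast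
  qed (use T fI in auto)
  also have "\<dots> = sum F I"
  proof (rule sum.mono_neutral_right)
    show "\<forall>i\<in>T \<union> I - I. F i = 0"
    proof
      fix y assume y: "y \<in> T \<union> I - I"
      show "F y = 0"
      proof (rule ccontr)
        assume "F y \<noteq> 0"
        then obtain \<gamma> j where "\<gamma> \<in> S" "y = act (\<alpha> - \<gamma>) (reps j)" using nz by blast
        then have "y \<in> I" unfolding I_def \<psi>_def by (auto intro!: image_eqI[where x="(\<gamma>, j)"])
        then show False using y by blast
      qed
    qed
  qed (use T fI in auto)
  also have "\<dots> = sum (F \<circ> \<psi>) (S \<times> UNIV)" unfolding I_def by (rule sum.reindex[OF inj])
  also have "\<dots> = (\<Sum>\<gamma>\<in>S. \<Sum>j\<in>UNIV. F (act (\<alpha> - \<gamma>) (reps j)))"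
    by (simp add: sum.cartesian_product \<psi>_def case_prod_beta')
  finally show ?thesis .
qed

lemma band_Uconj:
  assumes p: "1 \<le> p" and B: "band_op_X p \<rho> B"
  shows "band_op_Z p (Uconj act reps B)"
proof -
  have lpB: "lp_op p (*) B" using B by (simp add: band_op_X_def)
  obtain k R M where kM: "\<And>x y. norm (k x y) \<le> M" and kR: "\<And>x y. \<rho> x y > R \<Longrightarrow> k x y = 0"
    and kf: "\<And>u. in_lp p u \<Longrightarrow> B u = (\<lambda>x. \<Sum>y\<in>{y. \<rho> x y \<le> R}. k x y * u y)"
    using B unfolding band_op_X_def by blast
  define S where "S = {\<gamma>. \<exists>i j. \<rho> (reps i) (act (-\<gamma>) (reps j)) \<le> R}"
  have fS: "finite S"
  proof -
    have "S \<subseteq> (\<Union>(i, j)\<in>UNIV. (\<lambda>\<gamma>. act (-\<gamma>) (reps j)) -` {y. \<rho> (reps i) y \<le> R})"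
      unfolding S_def by auto
    moreover have "finite ((\<lambda>\<gamma>. act (-\<gamma>) (reps j)) -` {y. \<rho> (reps i) y \<le> R})" for i j
      by (rule finite_vimageI[OF balls]) (auto intro!: injI simp: act_inj_iff)
    ultimately show ?thesis by (auto intro: finite_subset)
  qed
  define a where "a = (\<lambda>\<gamma> \<alpha>. \<chi> i j. k (act \<alpha> (reps i)) (act (\<alpha> - \<gamma>) (reps j)))"
  have aM: "norm (a \<gamma> \<alpha>) \<le> real CARD('k) * (real CARD('k) * M)" for \<gamma> \<alpha>
  proof -
    have "norm (a \<gamma> \<alpha>) \<le> (\<Sum>i\<in>UNIV. norm (a \<gamma> \<alpha> $ i))" by (rule norm_vec_le_sum)
    also have "\<dots> \<le> of_nat (card (UNIV::'k set)) * (real CARD('k) * M)"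
    proof (rule sum_bounded_above)
      fix i
      have "norm (a \<gamma> \<alpha> $ i) \<le> (\<Sum>j\<in>UNIV. norm (a \<gamma> \<alpha> $ i $ j))" by (rule norm_vec_le_sum)
      also have "\<dots> \<le> of_nat (card (UNIV::'k set)) * M"
        by (rule sum_bounded_above) (simp add: a_def kM)
      finally show "norm (a \<gamma> \<alpha> $ i) \<le> real CARD('k) * M" by simp
    qed
    finally show ?thesis by simp
  qed
  have form: "Uconj act reps B v = (\<lambda>\<alpha>. \<Sum>\<gamma>\<in>S. a \<gamma> \<alpha> *v v (\<alpha> - \<gamma>))" if v: "in_lp p v" for v
  proof
    fix \<alpha>
    define w where "w = Uinv act reps v"
    have w: "in_lp p w" using lp_Uinv[OF p] v unfolding w_def by blast
    show "Uconj act reps B v \<alpha> = (\<Sum>\<gamma>\<in>S. a \<gamma> \<alpha> *v v (\<alpha> - \<gamma>))"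
    proof (subst vec_eq_iff, intro allI)
      fix i
      define x where "x = act \<alpha> (reps i)"
      have "Uconj act reps B v \<alpha> $ i = (\<Sum>y\<in>{y. \<rho> x y \<le> R}. k x y * w y)"
        unfolding Uconj_def w_def[symmetric] by (simp add: kf[OF w] x_def)
      also have "\<dots> = (\<Sum>\<gamma>\<in>S. \<Sum>j\<in>UNIV. k x (act (\<alpha> - \<gamma>) (reps j)) * w (act (\<alpha> - \<gamma>) (reps j)))"
      proof (rule sum_reindex_ball[OF fS balls])
        fix y assume nz: "k x y * w y \<noteq> 0"
        then have kn: "k x y \<noteq> 0" by auto
        then have yT: "\<rho> x y \<le> R" using kR by force
        obtain \<beta> j where y: "y = act \<beta> (reps j)" using surj_act by blast
        have "\<rho> (reps i) (act (-(\<alpha> - \<beta>)) (reps j)) \<le> R"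
          using yT unfolding x_def y rho_shift by simp
        then have "\<alpha> - \<beta> \<in> S" unfolding S_def by blast
        moreover have "y = act (\<alpha> - (\<alpha> - \<beta>)) (reps j)" using y by simp
        ultimately show "y \<in> {y. \<rho> x y \<le> R} \<and> (\<exists>\<gamma>\<in>S. \<exists>j. y = act (\<alpha> - \<gamma>) (reps j))"
          using yT by blast
      qed
      also have "\<dots> = (\<Sum>\<gamma>\<in>S. a \<gamma> \<alpha> *v v (\<alpha> - \<gamma>)) $ i"
        by (simp add: sum_component matrix_vector_mult_def a_def x_def w_def)
      finally show "Uconj act reps B v \<alpha> $ i = (\<Sum>\<gamma>\<in>S. a \<gamma> \<alpha> *v v (\<alpha> - \<gamma>)) $ i" .
    qed
  qed
  show ?thesis unfolding band_op_Z_def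
    using lp_op_Uconj[OF p lpB] fS aM form by blast
qed

definition pos :: "'x \<Rightarrow> (int^'n) \<times> 'k" where
  "pos x = (THE (\<alpha>, i). act \<alpha> (reps i) = x)"

lemma pos_act [simp]: "pos (act \<alpha> (reps i)) = (\<alpha>, i)"
  unfolding pos_def by (rule the_equality) (auto simp: act_inj_iff)

lemma band_Ub:
  assumes p: "1 \<le> p" and B: "band_op_Z p B"
  shows "band_op_X p \<rho> (Ub B)"
proof -
  have lpB: "lp_op p (*s) B" using B by (simp add: band_op_Z_def)
  obtain S and a :: "int^'n \<Rightarrow> int^'n \<Rightarrow> complex^'k^'k" and M where fS: "finite S"
    and aM: "\<And>\<gamma> x. \<gamma> \<in> S \<Longrightarrow> norm (a \<gamma> x) \<le> M"
    and af: "\<And>v. in_lp p v \<Longrightarrow> B v = (\<lambda>x. \<Sum>\<alpha>\<in>S. a \<alpha> x *v v (x - \<alpha>))"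
    using B unfolding band_op_Z_def by blast
  define k where "k = (\<lambda>x y. if fst (pos x) - fst (pos y) \<in> S
      then a (fst (pos x) - fst (pos y)) (fst (pos x)) $ snd (pos x) $ snd (pos y) else 0)"
  define R where "R = Max (insert 0 ((\<lambda>(\<gamma>, i, j). \<rho> (reps i) (act (-\<gamma>) (reps j))) ` (S \<times> UNIV \<times> UNIV)))"
  have kact: "k (act \<alpha> (reps i)) (act \<beta> (reps j)) =
      (if \<alpha> - \<beta> \<in> S then a (\<alpha> - \<beta>) \<alpha> $ i $ j else 0)" for \<alpha> i \<beta> j
    by (simp add: k_def)
  have inR: "\<rho> (act \<alpha> (reps i)) (act \<beta> (reps j)) \<le> R" if "\<alpha> - \<beta> \<in> S" for \<alpha> i \<beta> j
  proof -
    have "\<rho> (act \<alpha> (reps i)) (act \<beta> (reps j)) = (\<lambda>(\<gamma>, i, j). \<rho> (reps i) (act (-\<gamma>) (reps j))) (\<alpha> - \<beta>, i, j)"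
      by (simp add: rho_shift)
    also have "\<dots> \<le> R" unfolding R_def
    proof (rule Max_ge)
      show "finite (insert 0 ((\<lambda>(\<gamma>, i, j). \<rho> (reps i) (act (-\<gamma>) (reps j))) ` (S \<times> UNIV \<times> UNIV)))"
        using fS by simp
      show "(\<lambda>(\<gamma>, i, j). \<rho> (reps i) (act (-\<gamma>) (reps j))) (\<alpha> - \<beta>, i, j)
          \<in> insert 0 ((\<lambda>(\<gamma>, i, j). \<rho> (reps i) (act (-\<gamma>) (reps j))) ` (S \<times> UNIV \<times> UNIV))"
        by (intro insertI2 imageI) (use that in simp)
    qed
    finally show ?thesis .
  qed
  have kM: "norm (k x y) \<le> max M 0" for x y
  proof -
    obtain \<alpha> i where x: "x = act \<alpha> (reps i)" using surj_act by blast
    obtain \<beta> j where y: "y = act \<beta> (reps j)" using surj_act by blast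
    show ?thesis
    proof (cases "\<alpha> - \<beta> \<in> S")
      case True
      have "norm (a (\<alpha> - \<beta>) \<alpha> $ i $ j) \<le> norm (a (\<alpha> - \<beta>) \<alpha> $ i)" by (rule Finite_Cartesian_Product.norm_nth_le)
      also have "\<dots> \<le> norm (a (\<alpha> - \<beta>) \<alpha>)" by (rule Finite_Cartesian_Product.norm_nth_le)
      also have "\<dots> \<le> M" by (rule aM[OF True])
      finally show ?thesis using True by (simp add: x y kact)
    qed (simp add: x y kact)
  qed
  have kR: "k x y = 0" if "\<rho> x y > R" for x y
  proof -
    obtain \<alpha> i where x: "x = act \<alpha> (reps i)" using surj_act by blast
    obtain \<beta> j where y: "y = act \<beta> (reps j)" using surj_act by blast
    show ?thesis using inR[of \<alpha> \<beta> i j] that by (auto simp: x y kact)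
  qed
  have form: "Ub B u = (\<lambda>x. \<Sum>y\<in>{y. \<rho> x y \<le> R}. k x y * u y)" if u: "in_lp p u" for u
  proof (rule Uinv_ext)
    fix \<alpha> i
    define x where "x = act \<alpha> (reps i)"
    have w: "in_lp p (Umap act reps u)" using lp_Umap[OF p] u by blast
    have "Ub B u x = (\<Sum>\<gamma>\<in>S. a \<gamma> \<alpha> *v Umap act reps u (\<alpha> - \<gamma>)) $ i"
      by (simp add: Ub_def x_def af[OF w])
    also have "\<dots> = (\<Sum>\<gamma>\<in>S. \<Sum>j\<in>UNIV. k x (act (\<alpha> - \<gamma>) (reps j)) * u (act (\<alpha> - \<gamma>) (reps j)))"
      by (simp add: sum_component matrix_vector_mult_def x_def kact)
    also have "\<dots> = (\<Sum>y\<in>{y. \<rho> x y \<le> R}. k x y * u y)"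
    proof (rule sum_reindex_ball[OF fS balls, symmetric])
      fix y assume nz: "k x y * u y \<noteq> 0"
      obtain \<beta> j where y: "y = act \<beta> (reps j)" using surj_act by blast
      have S: "\<alpha> - \<beta> \<in> S" using nz by (auto simp: x_def y kact split: if_splits)
      have "\<rho> x y \<le> R" using inR[OF S] by (simp add: x_def y)
      moreover have "y = act (\<alpha> - (\<alpha> - \<beta>)) (reps j)" using y by simp
      ultimately show "y \<in> {y. \<rho> x y \<le> R} \<and> (\<exists>\<gamma>\<in>S. \<exists>j. y = act (\<alpha> - \<gamma>) (reps j))"
        using S by blast
    qed
    finally show "Ub B u (act \<alpha> (reps i)) = (\<lambda>x. \<Sum>y\<in>{y. \<rho> x y \<le> R}. k x y * u y) (act \<alpha> (reps i))"
      by (simp add: x_def)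
  qed
  show ?thesis unfolding band_op_X_def
    using lp_op_Ub[OF p lpB] kM kR form by blast
qed

end



context pds
begin

lemma Ap_Uconj:
  assumes p: "1 \<le> p" and A: "A \<in> Ap_X p \<rho>"
  shows "Uconj act reps A \<in> Ap_Z p"
proof -
  have lpA: "lp_op p (*) A" using A by (simp add: Ap_X_def)
  have N2: "0 < real CARD('k)^2" by simp
  have "\<exists>B. band_op_Z p B \<and> op_norm p (\<lambda>u x. Uconj act reps A u x - B u x) < \<epsilon>" if e: "0 < \<epsilon>" for \<epsilon>
  proof -
    obtain B where B: "band_op_X p \<rho> B" and op: "op_norm p (\<lambda>u x. A u x - B u x) < \<epsilon> / real CARD('k)^2"
    proof -
      have all: "\<forall>\<epsilon>>0. \<exists>B. band_op_X p \<rho> B \<and> op_norm p (\<lambda>u x. A u x - B u x) < \<epsilon>"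
        using A by (simp add: Ap_X_def)
      have "0 < \<epsilon> / real CARD('k)^2" using e N2 by simp
      then show ?thesis using all that by blast
    qed
    have lpB: "lp_op p (*) B" using B by (simp add: band_op_X_def)
    have eq: "(\<lambda>u x. Uconj act reps A u x - Uconj act reps B u x) = Uconj act reps (\<lambda>u x. A u x - B u x)"
      by (simp add: Uconj_def Umap_diff)
    have nd: "nice p (*) (\<lambda>u x. A u x - B u x)"
      by (rule nice_diff[OF p _ lp_op_nice[OF lpA] lp_op_nice[OF lpB]]) (simp add: right_diff_distrib)
    have "op_norm p (\<lambda>u x. Uconj act reps A u x - Uconj act reps B u x) \<le> real CARD('k)^2 * op_norm p (\<lambda>u x. A u x - B u x)"
      unfolding eq by (rule op_Uconj[OF p nd])
    also have "\<dots> < real CARD('k)^2 * (\<epsilon> / real CARD('k)^2)"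
      using op N2 by (intro mult_strict_left_mono) auto
    also have "\<dots> = \<epsilon>" using N2 by simp
    finally show ?thesis using band_Uconj[OF p B] by blast
  qed
  then show ?thesis unfolding Ap_Z_def using lp_op_Uconj[OF p lpA] by blast
qed

lemma Ap_Ub:
  assumes p: "1 \<le> p" and B: "B \<in> Ap_Z p"
  shows "Ub B \<in> Ap_X p \<rho>"
proof -
  have lpB: "lp_op p (*s) B" using B by (simp add: Ap_Z_def)
  have N2: "0 < real CARD('k)^2" by simp
  have "\<exists>B'. band_op_X p \<rho> B' \<and> op_norm p (\<lambda>u x. Ub B u x - B' u x) < \<epsilon>" if e: "0 < \<epsilon>" for \<epsilon>
  proof -
    obtain B' where B': "band_op_Z p B'" and op: "op_norm p (\<lambda>u x. B u x - B' u x) < \<epsilon> / real CARD('k)^2"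
    proof -
      have all: "\<forall>\<epsilon>>0. \<exists>B'. band_op_Z p B' \<and> op_norm p (\<lambda>u x. B u x - B' u x) < \<epsilon>"
        using B by (simp add: Ap_Z_def)
      have "0 < \<epsilon> / real CARD('k)^2" using e N2 by simp
      then show ?thesis using all that by blast
    qed
    have lpB': "lp_op p (*s) B'" using B' by (simp add: band_op_Z_def)
    have eq: "(\<lambda>u x. Ub B u x - Ub B' u x) = Ub (\<lambda>u x. B u x - B' u x)"
      by (simp add: Ub_def Uinv_diff)
    have nd: "nice p (*s) (\<lambda>u x. B u x - B' u x)"
      by (rule nice_diff[OF p _ lp_op_nice[OF lpB] lp_op_nice[OF lpB']]) (rule smult_vec_diff)
    have "op_norm p (\<lambda>u x. Ub B u x - Ub B' u x) \<le> real CARD('k)^2 * op_norm p (\<lambda>u x. B u x - B' u x)"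
      unfolding eq by (rule op_Ub[OF p nd])
    also have "\<dots> < real CARD('k)^2 * (\<epsilon> / real CARD('k)^2)"
      using op N2 by (intro mult_strict_left_mono) auto
    also have "\<dots> = \<epsilon>" using N2 by simp
    finally show ?thesis using band_Ub[OF p B'] by blast
  qed
  then show ?thesis unfolding Ap_X_def using lp_op_Ub[OF p lpB] by blast
qed

end

theorem proposition3p2:
  fixes \<rho> :: "'x \<Rightarrow> 'x \<Rightarrow> real"
    and act :: "int^'n \<Rightarrow> 'x \<Rightarrow> 'x"
    and reps :: "'k::finite \<Rightarrow> 'x"
    and p :: ennreal
  assumes X: "periodic_discrete_metric_space \<rho> act reps"
    and p: "1 \<le> p"
  shows
    "(\<forall>A \<in> Ap_X p \<rho>. Uconj act reps A \<in> Ap_Z p) \<and>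
     (\<forall>B \<in> Ap_Z p. \<exists>A \<in> Ap_X p \<rho>. \<forall>v. in_lp p v \<longrightarrow> Uconj act reps A v = B v) \<and>
     (\<forall>A \<in> Ap_X p \<rho>. \<forall>A' \<in> Ap_X p \<rho>.
        (\<forall>v. in_lp p v \<longrightarrow> Uconj act reps A v = Uconj act reps A' v) \<longrightarrow>
        (\<forall>u. in_lp p u \<longrightarrow> A u = A' u)) \<and>
     (\<forall>A \<in> Ap_X p \<rho>. \<forall>A' \<in> Ap_X p \<rho>. \<forall>v. in_lp p v \<longrightarrow>
        Uconj act reps (\<lambda>u x. A u x + A' u x) v =
          (\<lambda>\<alpha>. Uconj act reps A v \<alpha> + Uconj act reps A' v \<alpha>)) \<and>
     (\<forall>A \<in> Ap_X p \<rho>. \<forall>c. \<forall>v. in_lp p v \<longrightarrow>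
        Uconj act reps (\<lambda>u x. c * A u x) v = (\<lambda>\<alpha>. c *s Uconj act reps A v \<alpha>)) \<and>
     (\<forall>A \<in> Ap_X p \<rho>. \<forall>A' \<in> Ap_X p \<rho>. \<forall>v. in_lp p v \<longrightarrow>
        Uconj act reps (A \<circ> A') v = (Uconj act reps A \<circ> Uconj act reps A') v) \<and>
     (\<forall>v. in_lp p v \<longrightarrow> Uconj act reps id v = v) \<and>
     (\<exists>C>0. \<forall>A \<in> Ap_X p \<rho>.
        op_norm p (Uconj act reps A) \<le> C * op_norm p A \<and>
        op_norm p A \<le> C * op_norm p (Uconj act reps A))"
proof -
  interpret pds \<rho> act reps by (rule pds.intro[OF X])
  have c1: "\<forall>A \<in> Ap_X p \<rho>. Uconj act reps A \<in> Ap_Z p" using Ap_Uconj[OF p] by blast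
  have c2: "\<forall>B \<in> Ap_Z p. \<exists>A \<in> Ap_X p \<rho>. \<forall>v. in_lp p v \<longrightarrow> Uconj act reps A v = B v"
  proof
    fix B :: "(int^'n \<Rightarrow> complex^'k) \<Rightarrow> (int^'n \<Rightarrow> complex^'k)" assume B: "B \<in> Ap_Z p"
    have "\<forall>v. Uconj act reps (Ub B) v = B v" by (simp add: Uconj_def Ub_def)
    then show "\<exists>A \<in> Ap_X p \<rho>. \<forall>v. in_lp p v \<longrightarrow> Uconj act reps A v = B v"
      using Ap_Ub[OF p B] by blast
  qed
  have c3: "\<forall>A \<in> Ap_X p \<rho>. \<forall>A' \<in> Ap_X p \<rho>.
        (\<forall>v. in_lp p v \<longrightarrow> Uconj act reps A v = Uconj act reps A' v) \<longrightarrow>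
        (\<forall>u. in_lp p u \<longrightarrow> A u = A' u)"
  proof (intro ballI impI allI)
    fix A A' :: "('x \<Rightarrow> complex) \<Rightarrow> ('x \<Rightarrow> complex)" and u :: "'x \<Rightarrow> complex" assume h: "\<forall>v. in_lp p v \<longrightarrow> Uconj act reps A v = Uconj act reps A' v" and u: "in_lp p u"
    have "in_lp p (Umap act reps u)" using lp_Umap[OF p] u by blast
    then have "Uconj act reps A (Umap act reps u) = Uconj act reps A' (Umap act reps u)" using h by blast
    then have "Umap act reps (A u) = Umap act reps (A' u)" by (simp add: Uconj_def)
    then show "A u = A' u" by (rule Umap_inj)
  qed
  have c4: "\<forall>A \<in> Ap_X p \<rho>. \<forall>A' \<in> Ap_X p \<rho>. \<forall>v. in_lp p v \<longrightarrow>
        Uconj act reps (\<lambda>u x. A u x + A' u x) v =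
          (\<lambda>\<alpha>. Uconj act reps A v \<alpha> + Uconj act reps A' v \<alpha>)"
    by (simp add: Uconj_def Umap_add)
  have c5: "\<forall>A \<in> Ap_X p \<rho>. \<forall>c. \<forall>v. in_lp p v \<longrightarrow>
        Uconj act reps (\<lambda>u x. c * A u x) v = (\<lambda>\<alpha>. c *s Uconj act reps A v \<alpha>)"
    by (simp add: Uconj_def Umap_cmult)
  have c6: "\<forall>A \<in> Ap_X p \<rho>. \<forall>A' \<in> Ap_X p \<rho>. \<forall>v. in_lp p v \<longrightarrow>
        Uconj act reps (A \<circ> A') v = (Uconj act reps A \<circ> Uconj act reps A') v"
    by (simp add: Uconj_def)
  have c7: "\<forall>v. in_lp p v \<longrightarrow> Uconj act reps id v = v"
    by (simp add: Uconj_def)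
  have c8: "\<exists>C>0. \<forall>A \<in> Ap_X p \<rho>.
        op_norm p (Uconj act reps A) \<le> C * op_norm p A \<and>
        op_norm p A \<le> C * op_norm p (Uconj act reps A)"
  proof (intro exI conjI ballI)
    show "0 < real CARD('k)^2" by simp
  next
    fix A :: "('x \<Rightarrow> complex) \<Rightarrow> ('x \<Rightarrow> complex)" assume A: "A \<in> Ap_X p \<rho>"
    have nA: "nice p (*) A" using A by (simp add: Ap_X_def lp_op_nice)
    show "op_norm p (Uconj act reps A) \<le> real CARD('k)^2 * op_norm p A"
      by (rule op_Uconj[OF p nA])
    have eq: "Ub (Uconj act reps A) = A" by (simp add: Ub_def Uconj_def)
    have "op_norm p (Ub (Uconj act reps A)) \<le> real CARD('k)^2 * op_norm p (Uconj act reps A)"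
      by (rule op_Ub[OF p nice_Uconj[OF p nA]])
    then show "op_norm p A \<le> real CARD('k)^2 * op_norm p (Uconj act reps A)" by (simp add: eq)
  qed
  show ?thesis by (intro conjI c1 c2 c3 c4 c5 c6 c7 c8)
qed


end
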